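(* Let $p_n(\mathbf y)$ be a linear sequence of symmetric functions of binomial type, and let $\theta,\phi$ be shift-invariant linear operators on $\Lambda$. Then for every $n\ge0$, $$\epsilon\,\theta\phi\, p_n(\mathbf y)=\sum_{k=0}^n\binom nk\big(\epsilon\,\theta\, p_k(\mathbf y)\big)\big(\epsilon\,\phi\, p_{n-k}(\mathbf y)\big).$$
   Context: $\Lambda$ is the algebra of complex symmetric functions in $\mathbf y=(y_1,y_2,\dots)$. A linear sequence of symmetric functions of binomial type is $$p_n(\mathbf y)=\sum_{\lambda\vdash n}\frac{n!}{\prod_i\lambda_i!}\Big(\prod_ia_{\lambda_i}\Big)m_\lambda(\mathbf y)$$ for complex numbers $a_0=1,a_1\ne0,a_2,\dots$, where $m_\lambda$ is the monomial symmetric function. A linear operator $\theta$ on $\Lambda$ is shift-invariant if $E^a\theta=\theta E^a$ for all $a\in\mathbb C$, where $E^ap(y_1,y_2,\dots)=p(a,y_1,y_2,\dots)$. $\epsilon p=p(0,0,\dots)$. *)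

theory Defs
  imports Complex_Main "HOL-Library.Multiset"
begin

text \<open>Symmetric functions in countably many variables y_1, y_2, ... (indexed here by
 0, 1, 2, ...) are modelled as formal power series: a coefficient function on
 monomials. A monomial is an exponent vector nat => nat with finite support.\<close>

type_synonym symfun = "(nat \<Rightarrow> nat) \<Rightarrow> complex"

definition monomials :: "(nat \<Rightarrow> nat) set" where
  "monomials = {\<beta>. finite {i. \<beta> i \<noteq> 0}}"

definition mdeg :: "(nat \<Rightarrow> nat) \<Rightarrow> nat" where
  "mdeg \<beta> = (\<Sum>i\<in>{i. \<beta> i \<noteq> 0}. \<beta> i)"

definition Lambda :: "symfun set" where
  "Lambda = {f. (\<forall>\<beta>. f \<beta> \<noteq> 0 \<longrightarrow> \<beta> \<in> monomials)
             \<and> (\<exists>d. \<forall>\<beta>. f \<beta> \<noteq> 0 \<longrightarrow> mdeg \<beta> \<le> d)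
             \<and> (\<forall>\<sigma> \<beta>. bij \<sigma> \<longrightarrow> f (\<beta> \<circ> \<sigma>) = f \<beta>)}"

definition shift_in :: "nat \<Rightarrow> (nat \<Rightarrow> nat) \<Rightarrow> (nat \<Rightarrow> nat)" where
  "shift_in j \<beta> = (\<lambda>i. if i = 0 then j else \<beta> (i - 1))"

text \<open>E^a p (y_1,y_2,...) = p(a, y_1, y_2, ...).\<close>
definition Eshift :: "complex \<Rightarrow> symfun \<Rightarrow> symfun" where
  "Eshift a p = (\<lambda>\<beta>. \<Sum>j\<in>{j. p (shift_in j \<beta>) \<noteq> 0}. a ^ j * p (shift_in j \<beta>))"

definition epsilon :: "symfun \<Rightarrow> complex" where
  "epsilon p = p (\<lambda>_. 0)"

definition linear_on_Lambda :: "(symfun \<Rightarrow> symfun) \<Rightarrow> bool" where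
  "linear_on_Lambda \<theta> \<longleftrightarrow> (\<forall>p\<in>Lambda. \<theta> p \<in> Lambda)
     \<and> (\<forall>p\<in>Lambda. \<forall>q\<in>Lambda. \<theta> (\<lambda>\<beta>. p \<beta> + q \<beta>) = (\<lambda>\<beta>. \<theta> p \<beta> + \<theta> q \<beta>))
     \<and> (\<forall>c. \<forall>p\<in>Lambda. \<theta> (\<lambda>\<beta>. c * p \<beta>) = (\<lambda>\<beta>. c * \<theta> p \<beta>))"

definition shift_invariant :: "(symfun \<Rightarrow> symfun) \<Rightarrow> bool" where
  "shift_invariant \<theta> \<longleftrightarrow> (\<forall>a. \<forall>p\<in>Lambda. Eshift a (\<theta> p) = \<theta> (Eshift a p))"

definition partitions :: "nat \<Rightarrow> nat multiset set" where
  "partitions n = {lam. (\<forall>i\<in>#lam. 0 < i) \<and> sum_mset lam = n}"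

definition msym :: "nat multiset \<Rightarrow> symfun" where
  "msym lam = (\<lambda>\<beta>. if \<beta> \<in> monomials \<and> image_mset \<beta> (mset_set {i. \<beta> i \<noteq> 0}) = lam
                  then 1 else 0)"

definition binom_seq :: "(nat \<Rightarrow> complex) \<Rightarrow> nat \<Rightarrow> symfun" where
  "binom_seq a n = (\<lambda>\<beta>. \<Sum>lam\<in>partitions n.
      (fact n / (\<Prod>i\<in>#lam. fact i)) * (\<Prod>i\<in>#lam. a i) * msym lam \<beta>)"

end

theory Submission imports Defs "HOL-Computational_Algebra.Formal_Power_Series" begin

lemma supp_sub: fixes \<beta> :: "nat \<Rightarrow> nat" shows "\<forall>i\<ge>m. \<beta> i = 0 \<Longrightarrow> {i. \<beta> i \<noteq> 0} \<subseteq> {..<m}"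
proof
  fix i assume m: "\<forall>i\<ge>m. \<beta> i = 0" and "i \<in> {i. \<beta> i \<noteq> 0}"
  then have "\<not> m \<le> i" by auto
  then show "i \<in> {..<m}" by simp
qed

lemma mono_iff: "\<beta> \<in> monomials \<longleftrightarrow> (\<exists>m. \<forall>i\<ge>m. \<beta> i = 0)"
proof
  assume "\<beta> \<in> monomials"
  then obtain m where m: "\<forall>n\<in>{i. \<beta> i \<noteq> 0}. n < m"
    unfolding monomials_def using finite_nat_set_iff_bounded by blast
  then have "\<forall>i\<ge>m. \<beta> i = 0" using leD by blast
  then show "\<exists>m. \<forall>i\<ge>m. \<beta> i = 0" by blast
next
  assume "\<exists>m. \<forall>i\<ge>m. \<beta> i = 0"
  then obtain m where m: "\<forall>i\<ge>m. \<beta> i = 0" by blast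
  have "{i. \<beta> i \<noteq> 0} \<subseteq> {..<m}" using m by (rule supp_sub)
  then show "\<beta> \<in> monomials" unfolding monomials_def using finite_subset by blast
qed


lemma mdeg_bound: "\<forall>i\<ge>m. \<beta> i = 0 \<Longrightarrow> mdeg \<beta> = (\<Sum>i<m. \<beta> i)"
  unfolding mdeg_def by (rule sum.mono_neutral_left) (auto dest: supp_sub)

definition cw :: "(nat \<Rightarrow> complex) \<Rightarrow> (nat \<Rightarrow> nat) \<Rightarrow> complex" where
  "cw a \<beta> = (\<Prod>i\<in>{i. \<beta> i \<noteq> 0}. a (\<beta> i) / fact (\<beta> i))"

lemma cw_bound: "a 0 = 1 \<Longrightarrow> \<forall>i\<ge>m. \<beta> i = 0 \<Longrightarrow> cw a \<beta> = (\<Prod>i<m. a (\<beta> i) / fact (\<beta> i))"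
  unfolding cw_def by (rule prod.mono_neutral_left) (auto dest: supp_sub)

lemma fin_part: "finite (partitions n)"
proof -
  have "partitions n \<subseteq> mset ` {xs. set xs \<subseteq> {0..n} \<and> length xs \<le> n}"
  proof
    fix M assume M: "M \<in> partitions n"
    obtain xs where xs: "M = mset xs" by (metis ex_mset)
    have pos: "\<forall>i\<in>#M. 0 < i" and s: "sum_mset M = n" using M by (auto simp: partitions_def)
    have "size M \<le> sum_mset M" using pos
    proof (induction M)
      case (add x M) then show ?case by auto
    qed simp
    moreover have "i \<le> sum_mset M" if "i \<in># M" for i using that
      by (induction M) auto
    then have "\<forall>i\<in>#M. i \<le> n" using s by blast
    ultimately show "M \<in> mset ` {xs. set xs \<subseteq> {0..n} \<and> length xs \<le> n}"
      using s xs by auto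
  qed
  moreover have "finite (mset ` {xs. set xs \<subseteq> {0..n} \<and> length xs \<le> n})"
    by (intro finite_imageI finite_lists_length_le) auto
  ultimately show ?thesis by (rule finite_subset)
qed

lemma msym_eq: "\<beta> \<in> monomials \<Longrightarrow> msym lam \<beta> = (if lam = image_mset \<beta> (mset_set {i. \<beta> i \<noteq> 0}) then 1 else 0)"
  unfolding msym_def by auto

lemma closed_form:
  assumes "\<beta> \<in> monomials"
  shows "binom_seq a n \<beta> = (if mdeg \<beta> = n then fact n * cw a \<beta> else 0)"
proof -
  define S where "S = {i. \<beta> i \<noteq> 0}"
  define l0 where "l0 = image_mset \<beta> (mset_set S)"
  have fS: "finite S" using assms by (simp add: S_def monomials_def)
  have "binom_seq a n \<beta> = (\<Sum>lam\<in>partitions n. if lam = l0 then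
      (fact n / (\<Prod>i\<in>#lam. fact i)) * (\<Prod>i\<in>#lam. a i) else 0)"
    unfolding binom_seq_def using assms by (auto simp: msym_eq S_def l0_def intro!: sum.cong)
  also have "\<dots> = (if l0 \<in> partitions n then (fact n / (\<Prod>i\<in>#l0. fact i)) * (\<Prod>i\<in>#l0. a i) else 0)"
    using fin_part by (simp add: sum.delta')
  also have "l0 \<in> partitions n \<longleftrightarrow> mdeg \<beta> = n"
    using fS by (auto simp: partitions_def l0_def mdeg_def S_def sum_unfold_sum_mset)
  also have "(\<Prod>i\<in>#l0. fact i) = (\<Prod>i\<in>S. fact (\<beta> i) :: complex)"
    by (simp add: l0_def prod_unfold_prod_mset image_mset.compositionality o_def)
  also have "(\<Prod>i\<in>#l0. a i) = (\<Prod>i\<in>S. a (\<beta> i))"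
    by (simp add: l0_def prod_unfold_prod_mset image_mset.compositionality o_def)
  finally show ?thesis by (simp add: cw_def S_def prod_dividef)
qed

lemma nonmono_zero: "\<beta> \<notin> monomials \<Longrightarrow> binom_seq a n \<beta> = 0"
  unfolding binom_seq_def msym_def by simp


lemma shift_bound: "\<forall>i\<ge>m. \<beta> i = 0 \<Longrightarrow> \<forall>i\<ge>Suc m. shift_in j \<beta> i = 0"
  by (auto simp: shift_in_def)

lemma shift_nonmono: "\<beta> \<notin> monomials \<Longrightarrow> shift_in j \<beta> \<notin> monomials"
proof -
  assume nm: "\<beta> \<notin> monomials"
  show ?thesis
  proof
    assume "shift_in j \<beta> \<in> monomials"
    then obtain m where m: "\<forall>i\<ge>m. shift_in j \<beta> i = 0" by (auto simp: mono_iff)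
    have "\<forall>i\<ge>m. \<beta> i = 0"
    proof (intro allI impI)
      fix i assume "m \<le> i"
      then have "shift_in j \<beta> (Suc i) = 0" using m by simp
      then show "\<beta> i = 0" by (simp add: shift_in_def)
    qed
    with nm show False using mono_iff by blast
  qed
qed

lemma shift_sum: "(\<Sum>i<Suc m. shift_in j \<beta> i) = j + (\<Sum>i<m. \<beta> i)"
  by (simp add: sum.lessThan_Suc_shift shift_in_def del: sum.lessThan_Suc)

lemma shift_prod: "(\<Prod>i<Suc m. g (shift_in j \<beta> i)) = g j * (\<Prod>i<m. g (\<beta> i))"
  by (simp add: prod.lessThan_Suc_shift shift_in_def del: prod.lessThan_Suc)

lemma shift_decomp: "\<beta> = shift_in (\<beta> 0) (\<lambda>i. \<beta> (Suc i))"
  by (auto simp: shift_in_def fun_eq_iff)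

lemma closed_bound:
  assumes "a 0 = 1" "\<forall>i\<ge>m. \<beta> i = 0"
  shows "binom_seq a n \<beta> = (if (\<Sum>i<m. \<beta> i) = n then fact n * (\<Prod>i<m. a (\<beta> i) / fact (\<beta> i)) else 0)"
proof -
  have "\<beta> \<in> monomials" using assms(2) by (auto simp: mono_iff)
  then show ?thesis using closed_form[of \<beta> a n] mdeg_bound[OF assms(2)] cw_bound[where a=a and m=m and \<beta>=\<beta>, OF assms(1) assms(2)] by simp
qed

lemma msym_perm: assumes "bij \<sigma>" shows "msym lam (\<beta> \<circ> \<sigma>) = msym lam \<beta>"
proof -
  have inj: "inj \<sigma>" and su: "surj \<sigma>" using assms bij_is_inj bij_is_surj by auto
  have e: "{i. (\<beta> \<circ> \<sigma>) i \<noteq> 0} = \<sigma> -` {i. \<beta> i \<noteq> 0}" by auto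
  have im: "\<sigma> ` (\<sigma> -` {i. \<beta> i \<noteq> 0}) = {i. \<beta> i \<noteq> 0}" by (rule surj_image_vimage_eq[OF su])
  have mono: "(\<beta> \<circ> \<sigma>) \<in> monomials \<longleftrightarrow> \<beta> \<in> monomials"
    unfolding monomials_def e mem_Collect_eq
  proof
    assume "finite (\<sigma> -` {i. \<beta> i \<noteq> 0})"
    then have "finite (\<sigma> ` (\<sigma> -` {i. \<beta> i \<noteq> 0}))" by (rule finite_imageI)
    then show "finite {i. \<beta> i \<noteq> 0}" by (simp only: im)
  next
    assume "finite {i. \<beta> i \<noteq> 0}"
    then show "finite (\<sigma> -` {i. \<beta> i \<noteq> 0})" by (rule finite_vimageI[OF _ inj])
  qed
  have "image_mset (\<beta> \<circ> \<sigma>) (mset_set (\<sigma> -` {i. \<beta> i \<noteq> 0}))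
      = image_mset \<beta> (image_mset \<sigma> (mset_set (\<sigma> -` {i. \<beta> i \<noteq> 0})))"
    by (simp add: image_mset.compositionality)
  also have "\<dots> = image_mset \<beta> (mset_set {i. \<beta> i \<noteq> 0})"
    by (simp only: image_mset_mset_set[OF inj_on_subset[OF inj subset_UNIV]] im)
  finally show ?thesis unfolding msym_def e mono by simp
qed

lemma binom_Lambda: "binom_seq a n \<in> Lambda"
proof -
  have "\<forall>\<beta>. binom_seq a n \<beta> \<noteq> 0 \<longrightarrow> \<beta> \<in> monomials" using nonmono_zero by blast
  moreover have "\<forall>\<beta>. binom_seq a n \<beta> \<noteq> 0 \<longrightarrow> mdeg \<beta> \<le> n"
    using closed_form nonmono_zero by (metis order_refl)
  moreover have "\<forall>\<sigma> \<beta>. bij \<sigma> \<longrightarrow> binom_seq a n (\<beta> \<circ> \<sigma>) = binom_seq a n \<beta>"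
    by (simp add: binom_seq_def msym_perm)
  ultimately show ?thesis unfolding Lambda_def by blast
qed

lemma zero_Lambda: "(\<lambda>\<beta>. 0) \<in> Lambda"
  unfolding Lambda_def by simp

lemma add_Lambda: "p \<in> Lambda \<Longrightarrow> q \<in> Lambda \<Longrightarrow> (\<lambda>\<beta>. p \<beta> + q \<beta>) \<in> Lambda"
proof -
  assume p: "p \<in> Lambda" and q: "q \<in> Lambda"
  then obtain d1 d2 where d1: "\<forall>\<beta>. p \<beta> \<noteq> 0 \<longrightarrow> mdeg \<beta> \<le> d1" and d2: "\<forall>\<beta>. q \<beta> \<noteq> 0 \<longrightarrow> mdeg \<beta> \<le> d2"
    unfolding Lambda_def by blast
  have "\<forall>\<beta>. p \<beta> + q \<beta> \<noteq> 0 \<longrightarrow> mdeg \<beta> \<le> max d1 d2" using d1 d2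
    by (metis add.right_neutral add_0 le_max_iff_disj)
  then show ?thesis using p q unfolding Lambda_def by (auto, metis add.right_neutral)
qed

lemma smult_Lambda: "p \<in> Lambda \<Longrightarrow> (\<lambda>\<beta>. c * p \<beta>) \<in> Lambda"
  unfolding Lambda_def by auto

lemma lin_zero: "linear_on_Lambda \<theta> \<Longrightarrow> \<theta> (\<lambda>\<beta>. 0) = (\<lambda>\<beta>. 0)"
proof -
  assume lin: "linear_on_Lambda \<theta>"
  have sc: "\<And>c p. p \<in> Lambda \<Longrightarrow> \<theta> (\<lambda>\<beta>. c * p \<beta>) = (\<lambda>\<beta>. c * \<theta> p \<beta>)"
    using lin unfolding linear_on_Lambda_def by blast
  show ?thesis using sc[OF zero_Lambda, of 0] by simp
qed

lemma sum_Lambda: "finite K \<Longrightarrow> (\<forall>k\<in>K. f k \<in> Lambda) \<Longrightarrow> (\<lambda>\<beta>. \<Sum>k\<in>K. c k * f k \<beta>) \<in> Lambda"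
proof (induction K rule: finite_induct)
  case empty then show ?case by (simp add: zero_Lambda)
next
  case (insert x F)
  then show ?case using add_Lambda[OF smult_Lambda[of "f x" "c x"], of "\<lambda>\<beta>. \<Sum>k\<in>F. c k * f k \<beta>"] by simp
qed

lemma lin_sum: assumes lin: "linear_on_Lambda \<theta>" shows "finite K \<Longrightarrow> (\<forall>k\<in>K. f k \<in> Lambda) \<Longrightarrow>
   \<theta> (\<lambda>\<beta>. \<Sum>k\<in>K. c k * f k \<beta>) = (\<lambda>\<beta>. \<Sum>k\<in>K. c k * \<theta> (f k) \<beta>)"
proof (induction K rule: finite_induct)
  case empty then show ?case by (simp add: lin_zero[OF lin])
next
  case (insert x F)
  have addL: "\<And>p q. p\<in>Lambda \<Longrightarrow> q\<in>Lambda \<Longrightarrow> \<theta> (\<lambda>\<beta>. p \<beta> + q \<beta>) = (\<lambda>\<beta>. \<theta> p \<beta> + \<theta> q \<beta>)"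
    using lin unfolding linear_on_Lambda_def by blast
  have l1: "(\<lambda>\<beta>. c x * f x \<beta>) \<in> Lambda" using insert by (simp add: smult_Lambda)
  have l2: "(\<lambda>\<beta>. \<Sum>k\<in>F. c k * f k \<beta>) \<in> Lambda" using insert by (simp add: sum_Lambda)
  have "\<theta> (\<lambda>\<beta>. \<Sum>k\<in>insert x F. c k * f k \<beta>) = \<theta> (\<lambda>\<beta>. (c x * f x \<beta>) + (\<Sum>k\<in>F. c k * f k \<beta>))"
    using insert by simp
  also have "\<dots> = (\<lambda>\<beta>. \<theta> (\<lambda>\<beta>. c x * f x \<beta>) \<beta> + \<theta> (\<lambda>\<beta>. \<Sum>k\<in>F. c k * f k \<beta>) \<beta>)"
    using addL[OF l1 l2] by simp
  also have "\<theta> (\<lambda>\<beta>. c x * f x \<beta>) = (\<lambda>\<beta>. c x * \<theta> (f x) \<beta>)"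
    using insert lin unfolding linear_on_Lambda_def by blast
  finally show ?case using insert by simp
qed

lemma mdeg_shift_ge: "shift_in j \<beta> \<in> monomials \<Longrightarrow> j \<le> mdeg (shift_in j \<beta>)"
proof (cases "j = 0")
  case False
  assume "shift_in j \<beta> \<in> monomials"
  then have f: "finite {i. shift_in j \<beta> i \<noteq> 0}" by (simp add: monomials_def)
  have "0 \<in> {i. shift_in j \<beta> i \<noteq> 0}" using False by (simp add: shift_in_def)
  from member_le_sum[OF this _ f, of "shift_in j \<beta>"] show ?thesis
    by (simp add: mdeg_def shift_in_def)
qed simp

lemma Esh:
  assumes "\<forall>\<beta>. f \<beta> \<noteq> 0 \<longrightarrow> \<beta> \<in> monomials \<and> mdeg \<beta> \<le> D"
  shows "Eshift c f \<beta> = (\<Sum>j\<le>D. f (shift_in j \<beta>) * c ^ j)"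
proof -
  have "{j. f (shift_in j \<beta>) \<noteq> 0} \<subseteq> {..D}"
    using assms mdeg_shift_ge by (fastforce)
  then show ?thesis unfolding Eshift_def
    by (intro sum.mono_neutral_cong_left) (auto simp: mult.commute)
qed

lemma binom_deg: "\<forall>\<beta>. binom_seq a n \<beta> \<noteq> 0 \<longrightarrow> \<beta> \<in> monomials \<and> mdeg \<beta> \<le> n"
  using closed_form nonmono_zero by (metis order_refl)

lemma Eshift_binom:
  assumes a0: "a 0 = 1"
  shows "Eshift c (binom_seq a n) \<beta> = (\<Sum>k\<le>n. of_nat (n choose k) * a k * c ^ k * binom_seq a (n - k) \<beta>)"
proof (cases "\<beta> \<in> monomials")
  case False
  then show ?thesis by (simp add: Esh[OF binom_deg] nonmono_zero shift_nonmono)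
next
  case True
  then obtain m where m: "\<forall>i\<ge>m. \<beta> i = 0" by (auto simp: mono_iff)
  define d where "d = (\<Sum>i<m. \<beta> i)"
  define P where "P = (\<Prod>i<m. a (\<beta> i) / fact (\<beta> i))"
  show ?thesis unfolding Esh[OF binom_deg]
  proof (rule sum.cong[OF refl])
    fix k assume k: "k \<in> {..n}"
    have fk: "fact n = (of_nat (n choose k) * fact k * fact (n - k) :: complex)"
    proof -
      have "fact k * fact (n - k) * (n choose k) = (fact n :: nat)" using binomial_fact_lemma[of k n] k by simp
      then have "(of_nat (fact n) :: complex) = of_nat (fact k * fact (n - k) * (n choose k))" by simp
      then show ?thesis by (simp only: of_nat_mult of_nat_fact mult_ac)
    qed
    have "binom_seq a n (shift_in k \<beta>) = (if (\<Sum>i<Suc m. shift_in k \<beta> i) = n then fact n * (\<Prod>i<Suc m. a (shift_in k \<beta> i) / fact (shift_in k \<beta> i)) else 0)"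
      by (rule closed_bound[where a=a, OF a0 shift_bound[OF m]])
    then have "binom_seq a n (shift_in k \<beta>) = (if k + d = n then fact n * (a k / fact k * P) else 0)"
      unfolding shift_sum shift_prod[where g="\<lambda>x. a x / fact x"] d_def P_def by simp
    moreover have "binom_seq a (n - k) \<beta> = (if d = n - k then fact (n - k) * P else 0)"
      using closed_bound[where a=a, OF a0 m] by (simp add: d_def P_def)
    ultimately show "binom_seq a n (shift_in k \<beta>) * c ^ k = of_nat (n choose k) * a k * c ^ k * binom_seq a (n - k) \<beta>"
      using k fk by auto
  qed
qed


definition bc :: "(nat \<Rightarrow> complex) \<Rightarrow> (nat \<Rightarrow> complex) \<Rightarrow> nat \<Rightarrow> complex" where
  "bc u v n = (\<Sum>k\<le>n. of_nat (n choose k) * u k * v (n - k))"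

definition EE :: "(nat \<Rightarrow> complex) \<Rightarrow> complex fps" where
  "EE u = Abs_fps (\<lambda>k. u k / fact k)"

lemma bc_fps: "bc u v n = fact n * fps_nth (EE u * EE v) n"
proof -
  have "fps_nth (EE u * EE v) n = (\<Sum>k\<le>n. u k / fact k * (v (n - k) / fact (n - k)))"
    by (simp add: fps_mult_nth EE_def atLeast0AtMost)
  then have "fact n * fps_nth (EE u * EE v) n = (\<Sum>k\<le>n. fact n * (u k / fact k * (v (n - k) / fact (n - k))))"
    by (simp add: sum_distrib_left)
  also have "\<dots> = bc u v n" unfolding bc_def
    by (intro sum.cong refl) (simp add: binomial_fact)
  finally show ?thesis by simp
qed

lemma EE_bc: "EE (bc u v) = EE u * EE v"
  by (simp add: fps_eq_iff EE_def bc_fps)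

lemma bc_assoc: "bc u (bc v w) n = bc (bc u v) w n"
  by (simp add: bc_fps EE_bc mult.assoc)

lemma conv_ident:
  fixes x e q :: "nat \<Rightarrow> complex"
  shows "(\<Sum>k\<le>n. of_nat (n choose k) * x k * (\<Sum>l\<le>n - k. of_nat ((n - k) choose l) * e (n - k - l) * q l))
       = (\<Sum>k\<le>n. of_nat (n choose k) * e (n - k) * (\<Sum>i\<le>k. of_nat (k choose i) * x i * q (k - i)))"
proof -
  have "(\<Sum>l\<le>m. of_nat (m choose l) * e (m - l) * q l) = bc q e m" for m
    unfolding bc_def by (simp add: mult_ac)
  then have "?thesis \<longleftrightarrow> bc x (bc q e) n = bc (bc x q) e n"
    unfolding bc_def by (simp add: mult_ac)
  moreover have "bc x (bc q e) n = bc (bc x q) e n" by (rule bc_assoc)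
  ultimately show ?thesis by blast
qed


lemma Esh':
  assumes "\<forall>\<beta>. f \<beta> \<noteq> 0 \<longrightarrow> \<beta> \<in> monomials \<and> mdeg \<beta> \<le> D0" "D0 \<le> D"
  shows "Eshift c f \<beta> = (\<Sum>j\<le>D. f (shift_in j \<beta>) * c ^ j)"
  using assms by (intro Esh) fastforce

lemma Lambda_deg: "f \<in> Lambda \<Longrightarrow> \<exists>D. \<forall>\<beta>. f \<beta> \<noteq> 0 \<longrightarrow> \<beta> \<in> monomials \<and> mdeg \<beta> \<le> D"
  unfolding Lambda_def by blast

lemma key:
  fixes a :: "nat \<Rightarrow> complex" and \<phi> :: "symfun \<Rightarrow> symfun"
  assumes a0: "a 0 = 1" and lin: "linear_on_Lambda \<phi>" and si: "shift_invariant \<phi>"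
  defines "e \<equiv> \<lambda>m. epsilon (\<phi> (binom_seq a m))"
  defines "G \<equiv> \<lambda>n \<beta>. \<Sum>k\<le>n. (of_nat (n choose k) * e (n - k)) * binom_seq a k \<beta>"
  shows "\<forall>n \<beta>. (\<forall>i\<ge>m. \<beta> i = 0) \<longrightarrow> \<phi> (binom_seq a n) \<beta> = G n \<beta>"
proof (induction m)
  case 0
  show ?case
  proof (intro allI impI)
    fix n and \<beta> :: "nat \<Rightarrow> nat" assume "\<forall>i\<ge>0. \<beta> i = 0"
    then have b: "\<beta> = (\<lambda>_. 0)" by auto
    have "binom_seq a k (\<lambda>_. 0) = (if k = 0 then 1 else 0)" for k
      using closed_bound[where a=a, OF a0, of 0 "\<lambda>_. 0" k] by auto
    then have "G n \<beta> = (\<Sum>k\<le>n. (if k = 0 then of_nat (n choose k) * e (n - k) else 0))"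
      unfolding G_def b by (intro sum.cong refl) simp
    also have "\<dots> = e n" by (simp add: sum.delta)
    finally show "\<phi> (binom_seq a n) \<beta> = G n \<beta>"
      by (simp add: b e_def epsilon_def)
  qed
next
  case (Suc m)
  show ?case
  proof (intro allI impI)
    fix n and \<beta> :: "nat \<Rightarrow> nat" assume bS: "\<forall>i\<ge>Suc m. \<beta> i = 0"
    define \<beta>' where "\<beta>' = (\<lambda>i. \<beta> (Suc i))"
    have b': "\<forall>i\<ge>m. \<beta>' i = 0" using bS by (simp add: \<beta>'_def)
    have bdec: "\<beta> = shift_in (\<beta> 0) \<beta>'" unfolding \<beta>'_def by (rule shift_decomp)
    have pL: "\<And>k. binom_seq a k \<in> Lambda" by (rule binom_Lambda)
    have phL: "\<phi> (binom_seq a n) \<in> Lambda" using lin pL unfolding linear_on_Lambda_def by blast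
    obtain D0 where D0: "\<forall>\<beta>. \<phi> (binom_seq a n) \<beta> \<noteq> 0 \<longrightarrow> \<beta> \<in> monomials \<and> mdeg \<beta> \<le> D0"
      using Lambda_deg[OF phL] by blast
    define D where "D = max D0 (max n (\<beta> 0))"
    have Gdeg: "\<forall>\<beta>. G n \<beta> \<noteq> 0 \<longrightarrow> \<beta> \<in> monomials \<and> mdeg \<beta> \<le> n"
    proof (intro allI impI)
      fix \<gamma> assume "G n \<gamma> \<noteq> 0"
      then obtain k where "k \<le> n" "binom_seq a k \<gamma> \<noteq> 0" unfolding G_def
        by (metis (no_types, lifting) atMost_iff mult_zero_right sum.neutral)
      then show "\<gamma> \<in> monomials \<and> mdeg \<gamma> \<le> n" using binom_deg[of a k] by fastforce
    qed
    have eq: "(\<Sum>j\<le>D. \<phi> (binom_seq a n) (shift_in j \<beta>') * c ^ j) = (\<Sum>j\<le>D. G n (shift_in j \<beta>') * c ^ j)" for c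
    proof -
      have "(\<Sum>j\<le>D. \<phi> (binom_seq a n) (shift_in j \<beta>') * c ^ j) = Eshift c (\<phi> (binom_seq a n)) \<beta>'"
        using Esh'[OF D0, of D c \<beta>'] by (simp add: D_def)
      also have "\<dots> = \<phi> (Eshift c (binom_seq a n)) \<beta>'"
        using si pL unfolding shift_invariant_def by simp
      also have "Eshift c (binom_seq a n) = (\<lambda>\<beta>. \<Sum>k\<le>n. (of_nat (n choose k) * a k * c ^ k) * binom_seq a (n - k) \<beta>)"
        using Eshift_binom[where a=a, OF a0] by auto
      also have "\<phi> \<dots> = (\<lambda>\<beta>. \<Sum>k\<le>n. (of_nat (n choose k) * a k * c ^ k) * \<phi> (binom_seq a (n - k)) \<beta>)"
        using lin_sum[OF lin, of "{..n}" "\<lambda>k. binom_seq a (n - k)"] pL by simp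
      finally have L: "(\<Sum>j\<le>D. \<phi> (binom_seq a n) (shift_in j \<beta>') * c ^ j) =
           (\<Sum>k\<le>n. (of_nat (n choose k) * a k * c ^ k) * G (n - k) \<beta>')"
        using Suc.IH b' by simp
      have "(\<Sum>j\<le>D. G n (shift_in j \<beta>') * c ^ j)
          = (\<Sum>j\<le>D. \<Sum>k\<le>n. (of_nat (n choose k) * e (n - k)) * (binom_seq a k (shift_in j \<beta>') * c ^ j))"
        unfolding G_def by (simp add: sum_distrib_left sum_distrib_right mult_ac)
      also have "\<dots> = (\<Sum>k\<le>n. (of_nat (n choose k) * e (n - k)) * (\<Sum>j\<le>D. binom_seq a k (shift_in j \<beta>') * c ^ j))"
        by (subst sum.swap) (simp add: sum_distrib_left)
      also have "\<dots> = (\<Sum>k\<le>n. (of_nat (n choose k) * e (n - k)) * Eshift c (binom_seq a k) \<beta>')"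
      proof (intro sum.cong refl)
        fix k assume "k \<in> {..n}"
        then have "k \<le> D" by (simp add: D_def)
        then show "(of_nat (n choose k) * e (n - k)) * (\<Sum>j\<le>D. binom_seq a k (shift_in j \<beta>') * c ^ j) =
             (of_nat (n choose k) * e (n - k)) * Eshift c (binom_seq a k) \<beta>'"
          using Esh'[OF binom_deg[of a k], of D c \<beta>'] by simp
      qed
      also have "\<dots> = (\<Sum>k\<le>n. of_nat (n choose k) * e (n - k) *
            (\<Sum>i\<le>k. of_nat (k choose i) * (a i * c ^ i) * binom_seq a (k - i) \<beta>'))"
        by (simp add: Eshift_binom[where a=a, OF a0] mult_ac)
      also have "\<dots> = (\<Sum>k\<le>n. of_nat (n choose k) * (a k * c ^ k) *
            (\<Sum>l\<le>n - k. of_nat ((n - k) choose l) * e (n - k - l) * binom_seq a l \<beta>'))"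
        by (rule conv_ident[symmetric])
      also have "\<dots> = (\<Sum>k\<le>n. (of_nat (n choose k) * a k * c ^ k) * G (n - k) \<beta>')"
        unfolding G_def by (simp add: mult_ac)
      finally show ?thesis using L by simp
    qed
    have "\<beta> 0 \<le> D" by (simp add: D_def)
    then have "\<phi> (binom_seq a n) (shift_in (\<beta> 0) \<beta>') = G n (shift_in (\<beta> 0) \<beta>')"
      using eq polyfun_eq_coeffs[where n=D and c="\<lambda>j. \<phi> (binom_seq a n) (shift_in j \<beta>')" and d="\<lambda>j. G n (shift_in j \<beta>')"]
      by blast
    then show "\<phi> (binom_seq a n) \<beta> = G n \<beta>" using bdec by simp
  qed
qed

theorem mainTheorem11:
  fixes a :: "nat \<Rightarrow> complex" and \<theta> \<phi> :: "symfun \<Rightarrow> symfun" and n :: nat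
  assumes "a 0 = 1" and "a 1 \<noteq> 0"
    and "linear_on_Lambda \<theta>" and "shift_invariant \<theta>"
    and "linear_on_Lambda \<phi>" and "shift_invariant \<phi>"
  shows "epsilon (\<theta> (\<phi> (binom_seq a n))) =
    (\<Sum>k=0..n. of_nat (n choose k) * epsilon (\<theta> (binom_seq a k))
                 * epsilon (\<phi> (binom_seq a (n - k))))"
proof -
  define e where "e = (\<lambda>m. epsilon (\<phi> (binom_seq a m)))"
  define G where "G = (\<lambda>n \<beta>. \<Sum>k\<le>n. (of_nat (n choose k) * e (n - k)) * binom_seq a k \<beta>)"
  have pL: "\<And>k. binom_seq a k \<in> Lambda" by (rule binom_Lambda)
  have phL: "\<phi> (binom_seq a n) \<in> Lambda" using assms(5) pL unfolding linear_on_Lambda_def by blast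
  have "\<phi> (binom_seq a n) \<beta> = G n \<beta>" for \<beta>
  proof (cases "\<beta> \<in> monomials")
    case True
    then obtain m where "\<forall>i\<ge>m. \<beta> i = 0" by (auto simp: mono_iff)
    then show ?thesis using key[where a=a and \<phi>=\<phi> and m=m, OF assms(1) assms(5) assms(6)] unfolding e_def G_def by blast
  next
    case False
    then have "\<phi> (binom_seq a n) \<beta> = 0" using phL unfolding Lambda_def by blast
    moreover have "G n \<beta> = 0" unfolding G_def using False by (simp add: nonmono_zero)
    ultimately show ?thesis by simp
  qed
  then have "\<phi> (binom_seq a n) = G n" by auto
  then have "\<theta> (\<phi> (binom_seq a n)) = (\<lambda>\<beta>. \<Sum>k\<le>n. (of_nat (n choose k) * e (n - k)) * \<theta> (binom_seq a k) \<beta>)"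
    using lin_sum[OF assms(3), of "{..n}" "binom_seq a"] pL unfolding G_def by simp
  then show ?thesis
    by (simp add: epsilon_def e_def atLeast0AtMost mult_ac)
qed

end
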